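(* Let $r_{\min}\in(0,1)$, $n\ge1$, $\gamma\ge1$ a perfect-square integer, and $\ell\ge0$ an integer with $\gamma^{\ell+1}\le n$. Put $a_\ell=n/\gamma^\ell$, $a_{\ell+1}=a_\ell/\gamma$, $n_\ell=n/(2^\ell\gamma^\ell)$, $n_{\ell+1}=n_\ell/(2\gamma)$, $K_1=\frac{4(1+r_{\min})^2}{\pi r_{\min}^2}$, $K_2=\frac1{2K_1}$, $M=K_22^{-\ell}\gamma$ (all assumed integers, $M$ even), and assume $M\ge100$. Let $V\subset[0,\sqrt{a_\ell}]^2$ with $|V|=n_\ell$ and minimum separation $r_{\min}$, partition $[0,\sqrt{a_\ell}]^2$ into $\gamma$ squarelets of side $\sqrt{a_{\ell+1}}$, and let $\mathcal D$ be a set of $M$ dense squarelets (squarelets containing at least $n_{\ell+1}$ points of $V$). Let $\lambda$ be any set of $n_\ell$ source–destination pairs on $V$ in which every node is a source exactly once and a destination exactly once. Then for each pair $p=(u,w)$ there is a set $R_p\subset\mathcal D$ of exactly $M/2$ squarelets $k$ with $r_{u,k}\ge\sqrt{2a_{\ell+1}}$ and $r_{w,k}\ge\sqrt{2a_{\ell+1}}$, and the set of incidences $\{(p,k):p\in\lambda,\ k\in R_p\}$ can be partitioned into at most $K_22^{-\ell}\gamma^2$ classes such that in each class every pair $p$ occurs at most once and every squarelet $k$ occurs in at most $n_{\ell+1}$ incidences. (Consequently each pair occurs in exactly $K_22^{-\ell-1}\gamma$ classes, with distinct squarelets.)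
   Context: For a point $u$ and a squarelet $A$, $r_{u,A}=\min_{v\in A}\lVert u-v\rVert$ denotes the Euclidean distance from $u$ to the closest point of $A$. *)

theory Defs
  imports "HOL-Analysis.Analysis" "HOL-Library.Disjoint_Sets"
begin

definition K1 :: "real \<Rightarrow> real" where
  "K1 r = 4 * (1 + r)^2 / (pi * r^2)"

definition K2 :: "real \<Rightarrow> real" where
  "K2 r = 1 / (2 * K1 r)"

definition gside :: "nat \<Rightarrow> nat" where
  "gside \<gamma> = nat \<lfloor>sqrt (real \<gamma>)\<rfloor>"

definition squarelets :: "nat \<Rightarrow> (nat \<times> nat) set" where
  "squarelets g = {0..<g} \<times> {0..<g}"

definition squarelet :: "real \<Rightarrow> nat \<times> nat \<Rightarrow> (real \<times> real) set" where
  "squarelet s k = {real (fst k) * s .. real (fst k + 1) * s} \<times> {real (snd k) * s .. real (snd k + 1) * s}"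

(* the squarelet a point belongs to in the partition (half-open cells, last row/column closed) *)
definition cell_of :: "nat \<Rightarrow> real \<Rightarrow> real \<times> real \<Rightarrow> nat \<times> nat" where
  "cell_of g s x = (min (nat \<lfloor>fst x / s\<rfloor>) (g - 1), min (nat \<lfloor>snd x / s\<rfloor>) (g - 1))"

definition dense_squarelet :: "nat \<Rightarrow> real \<Rightarrow> (real \<times> real) set \<Rightarrow> nat \<Rightarrow> nat \<times> nat \<Rightarrow> bool" where
  "dense_squarelet g s V t k \<longleftrightarrow> k \<in> squarelets g \<and> card {v \<in> V. cell_of g s v = k} \<ge> t"

definition rdist :: "real \<times> real \<Rightarrow> (real \<times> real) set \<Rightarrow> real" where
  "rdist u A = infdist u A"

end

theory Submission
  imports Defs
begin


lemma coord_bound: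
  fixes s x v :: real and a :: nat
  assumes s: "s > 0" and v: "real a * s \<le> v" "v \<le> real (a+1) * s" and d: "\<bar>x - v\<bar> < sqrt 2 * s"
  shows "a \<in> {nat \<lceil>x/s - sqrt 2 - 1\<rceil> ..< nat \<lceil>x/s - sqrt 2 - 1\<rceil> + 4}"
proof -
  have s2: "sqrt 2 < 3/2"
    by (rule real_less_lsqrt) (auto simp: power2_eq_square)
  have "real a * s < x + sqrt 2 * s" using v d by linarith
  hence h1: "real a < x/s + sqrt 2" using s by (simp add: field_simps)
  have "real (a+1) * s > x - sqrt 2 * s" using v d by linarith
  hence h2: "real a + 1 > x/s - sqrt 2" using s by (simp add: field_simps)
  define y where "y = x/s - sqrt 2 - 1"
  have "y < real a" using h2 y_def by linarith
  hence A: "\<lceil>y\<rceil> \<le> int a" by (simp add: ceiling_le_iff)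
  have "real a < y + 4" using h1 s2 y_def by linarith
  moreover have "y \<le> \<lceil>y\<rceil>" by (rule le_of_int_ceiling)
  ultimately have B: "int a < \<lceil>y\<rceil> + 4" by linarith
  have "nat \<lceil>y\<rceil> \<le> a \<and> a < nat \<lceil>y\<rceil> + 4" using A B by linarith
  thus ?thesis unfolding y_def by simp
qed

lemma bad_card:
  fixes s :: real and u :: "real \<times> real" and D :: "(nat\<times>nat) set"
  assumes s: "s > 0"
  shows "card {k \<in> D. rdist u (squarelet s k) < sqrt 2 * s} \<le> 16"
proof -
  define A where "A x = {nat \<lceil>x/s - sqrt 2 - 1\<rceil> ..< nat \<lceil>x/s - sqrt 2 - 1\<rceil> + 4}" for x
  have sub: "{k \<in> D. rdist u (squarelet s k) < sqrt 2 * s} \<subseteq> A (fst u) \<times> A (snd u)"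
  proof
    fix k assume "k \<in> {k \<in> D. rdist u (squarelet s k) < sqrt 2 * s}"
    hence lt: "infdist u (squarelet s k) < sqrt 2 * s" by (simp add: rdist_def)
    have cl: "closed (squarelet s k)" unfolding squarelet_def by (intro closed_Times closed_atLeastAtMost)
    have ne: "squarelet s k \<noteq> {}" unfolding squarelet_def using s by (auto simp: field_simps)
    obtain v where v: "v \<in> squarelet s k" "infdist u (squarelet s k) = dist u v"
      using infdist_attains_inf[OF cl ne] by blast
    have d1: "\<bar>fst u - fst v\<bar> < sqrt 2 * s"
      using dist_fst_le[of u v] lt v(2) by (simp add: dist_real_def)
    have d2: "\<bar>snd u - snd v\<bar> < sqrt 2 * s"
      using dist_snd_le[of u v] lt v(2) by (simp add: dist_real_def)
    have vv: "real (fst k) * s \<le> fst v" "fst v \<le> real (fst k + 1) * s"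
         "real (snd k) * s \<le> snd v" "snd v \<le> real (snd k + 1) * s"
      using v(1) unfolding squarelet_def by (auto simp: mem_Times_iff)
    show "k \<in> A (fst u) \<times> A (snd u)"
      using coord_bound[OF s vv(1,2) d1] coord_bound[OF s vv(3,4) d2]
      unfolding A_def by (simp add: mem_Times_iff)
  qed
  have "card (A (fst u) \<times> A (snd u)) = 16" unfolding A_def by (simp add: card_cartesian_product)
  moreover have "finite (A (fst u) \<times> A (snd u))" unfolding A_def by simp
  ultimately show ?thesis using card_mono[OF _ sub] by simp
qed


lemma card_le1_of_subsing:
  assumes "\<And>a b. a \<in> A \<Longrightarrow> b \<in> A \<Longrightarrow> a = b"
  shows "card A \<le> 1"
proof (cases "A = {}")
  case False
  then obtain a where "a \<in> A" by blast
  hence "A \<subseteq> {a}" using assms by blast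
  thus ?thesis using card_mono[of "{a}" A] by simp
qed simp

lemma partition_exists:
  fixes lam :: "'p set" and R :: "'p \<Rightarrow> 'k set" and m g t :: nat
  assumes fin: "finite lam" and Rp: "\<forall>p\<in>lam. finite (R p) \<and> card (R p) = m"
    and cl: "card lam \<le> g * t"
  shows "\<exists>P. partition_on {(p,k). p\<in>lam \<and> k\<in>R p} P \<and> card P \<le> m * g \<and>
     (\<forall>C\<in>P. (\<forall>p. card {k. (p,k)\<in>C} \<le> 1) \<and> (\<forall>k. card {p. (p,k)\<in>C} \<le> t))"
proof -
  define I where "I = {(p,k). p\<in>lam \<and> k\<in>R p}"
  define idx where "idx p = (SOME h. bij_betw h (R p) {0..<m})" for p
  have idx: "bij_betw (idx p) (R p) {0..<m}" if "p \<in> lam" for p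
  proof -
    have "\<exists>h. bij_betw h (R p) {0..<m}" using ex_bij_betw_finite_nat[of "R p"] Rp that by auto
    thus ?thesis unfolding idx_def by (rule someI_ex)
  qed
  obtain e where e: "bij_betw e lam {0..<card lam}" using ex_bij_betw_finite_nat[OF fin] by blast
  have einj: "inj_on e lam" using e bij_betw_def by blast
  define S where "S i k = {p \<in> lam. k \<in> R p \<and> idx p k = i}" for i k
  define rank where "rank i k p = card {q \<in> S i k. e q < e p}" for i k p
  define cls where "cls x = (idx (fst x) (snd x), rank (idx (fst x) (snd x)) (snd x) (fst x) div t)" for x
  define P where "P = (\<lambda>c. {x \<in> I. cls x = c}) ` (cls ` I)"
  have finS: "finite (S i k)" for i k using fin unfolding S_def by simp
  have rank_inj: "rank i k p \<noteq> rank i k p'" if "p \<in> S i k" "p' \<in> S i k" "p \<noteq> p'" for i k p p'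
  proof -
    have lam: "p \<in> lam" "p' \<in> lam" using that unfolding S_def by auto
    have "e p \<noteq> e p'" using einj lam that(3) inj_on_def by metis
    hence "e p < e p' \<or> e p' < e p" by arith
    moreover have "rank i k p < rank i k p'" if "e p < e p'" "p \<in> S i k" "p' \<in> S i k" for p p'
    proof -
      have "{q \<in> S i k. e q < e p} \<subset> {q \<in> S i k. e q < e p'}" using that by auto
      thus ?thesis unfolding rank_def by (intro psubset_card_mono) (simp add: finS)
    qed
    ultimately show ?thesis using that by (metis less_irrefl)
  qed
  have rank_lt: "rank i k p < card lam" if "p \<in> S i k" for i k p
  proof -
    have "{q \<in> S i k. e q < e p} \<subset> lam" using that unfolding S_def by auto
    thus ?thesis unfolding rank_def by (intro psubset_card_mono fin)
  qed
  have part: "partition_on I P"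
    unfolding partition_on_def disjoint_def P_def by auto
  have clsI: "cls ` I \<subseteq> {0..<m} \<times> {0..<g}"
  proof
    fix c assume "c \<in> cls ` I"
    then obtain p k where pk: "p \<in> lam" "k \<in> R p" "c = cls (p,k)" unfolding I_def by auto
    have i: "idx p k < m" using idx[OF pk(1)] pk(2) bij_betwE by fastforce
    have "p \<in> S (idx p k) k" unfolding S_def using pk by auto
    hence r: "rank (idx p k) k p < g * t" using rank_lt cl by (meson order_less_le_trans)
    hence "t > 0" by (cases "t = 0") auto
    hence "rank (idx p k) k p div t < g" using r by (simp add: div_less_iff_less_mult)
    thus "c \<in> {0..<m} \<times> {0..<g}" using i pk(3) unfolding cls_def by simp
  qed
  have "card P \<le> card (cls ` I)" unfolding P_def by (rule card_image_le) (rule finite_subset[OF clsI], simp)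
  also have "\<dots> \<le> card ({0..<m} \<times> {0..<g})" by (rule card_mono[OF _ clsI]) simp
  also have "\<dots> = m * g" by (simp add: card_cartesian_product)
  finally have cP: "card P \<le> m * g" .
  have props: "(\<forall>p. card {k. (p,k)\<in>C} \<le> 1) \<and> (\<forall>k. card {p. (p,k)\<in>C} \<le> t)" if "C \<in> P" for C
  proof -
    obtain i j where C: "C = {x \<in> I. cls x = (i,j)}" using \<open>C \<in> P\<close> unfolding P_def by auto
    have A: "card {k. (p,k)\<in>C} \<le> 1" for p
    proof (rule card_le1_of_subsing)
      fix a b assume "a \<in> {k. (p,k)\<in>C}" "b \<in> {k. (p,k)\<in>C}"
      hence ab: "p \<in> lam" "a \<in> R p" "b \<in> R p" "idx p a = i" "idx p b = i"
        unfolding C I_def cls_def by auto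
      show "a = b" using idx[OF ab(1)] ab(2-5) by (metis bij_betw_def inj_on_def)
    qed
    have B: "card {p. (p,k)\<in>C} \<le> t" for k
    proof -
      have sub: "{p. (p,k)\<in>C} \<subseteq> S i k" unfolding C I_def S_def cls_def by auto
      have inj: "inj_on (rank i k) {p. (p,k)\<in>C}"
        using rank_inj sub unfolding inj_on_def by blast
      have img: "rank i k ` {p. (p,k)\<in>C} \<subseteq> {j*t..<j*t+t}"
      proof
        fix r assume "r \<in> rank i k ` {p. (p,k)\<in>C}"
        then obtain p where p: "(p,k) \<in> C" "r = rank i k p" by auto
        have dv: "rank i k p div t = j" using p(1) unfolding C cls_def by auto
        have "p \<in> S i k" using sub p(1) by auto
        hence "t > 0" using rank_lt cl p(1) by (metis less_le_trans mult_0_right not_gr0 not_less0)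
        thus "r \<in> {j*t..<j*t+t}" using dv p(2)
          by (metis atLeastLessThan_iff div_times_less_eq_dividend dividend_less_div_times mult.commute add.commute)
      qed
      have "card {p. (p,k)\<in>C} = card (rank i k ` {p. (p,k)\<in>C})" using card_image[OF inj] by simp
      also have "\<dots> \<le> card {j*t..<j*t+t}" by (rule card_mono[OF _ img]) simp
      finally show ?thesis by simp
    qed
    show ?thesis using A B by blast
  qed
  show ?thesis using part cP props unfolding I_def by blast
qed
theorem lemma6:
  fixes rmin :: real and n \<gamma> l al al1 nl nl1 M :: nat
    and V :: "(real \<times> real) set" and D :: "(nat \<times> nat) set"
    and lam :: "((real \<times> real) \<times> (real \<times> real)) set"
  assumes "0 < rmin" "rmin < 1" "n \<ge> 1" "\<gamma> \<ge> 1" "\<exists>g::nat. \<gamma> = g^2"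
    and "\<gamma> ^ (l + 1) \<le> n"
    and "real al = real n / real \<gamma> ^ l"
    and "real al1 = real al / real \<gamma>"
    and "real nl = real n / (2 ^ l * real \<gamma> ^ l)"
    and "real nl1 = real nl / (2 * real \<gamma>)"
    and "real M = K2 rmin * real \<gamma> / 2 ^ l"
    and "even M" "M \<ge> 100"
    and "finite V" "card V = nl" "V \<subseteq> {0..sqrt (real al)} \<times> {0..sqrt (real al)}"
    and "\<forall>u\<in>V. \<forall>v\<in>V. u \<noteq> v \<longrightarrow> dist u v \<ge> rmin"
    and "D \<subseteq> {k. dense_squarelet (gside \<gamma>) (sqrt (real al1)) V nl1 k}" "card D = M"
    and "lam \<subseteq> V \<times> V" "\<forall>u\<in>V. \<exists>!w. (u, w) \<in> lam" "\<forall>w\<in>V. \<exists>!u. (u, w) \<in> lam"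
  shows "\<exists>R. (\<forall>p\<in>lam. R p \<subseteq> D \<and> card (R p) = M div 2 \<and>
              (\<forall>k\<in>R p. rdist (fst p) (squarelet (sqrt (real al1)) k) \<ge> sqrt (2 * real al1) \<and>
                        rdist (snd p) (squarelet (sqrt (real al1)) k) \<ge> sqrt (2 * real al1)))
           \<and> (\<exists>P. partition_on {(p, k). p \<in> lam \<and> k \<in> R p} P
                  \<and> real (card P) \<le> K2 rmin * real \<gamma> ^ 2 / 2 ^ l
                  \<and> (\<forall>C\<in>P. (\<forall>p. card {k. (p, k) \<in> C} \<le> 1) \<and>
                             (\<forall>k. card {p. (p, k) \<in> C} \<le> nl1)))"
proof -
  have g1: "real \<gamma> \<ge> 1" using assms(4) by simp
  have "real \<gamma> ^ (l+1) \<le> real n" using assms(6) by (metis of_nat_le_iff of_nat_power)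
  moreover have "real al1 * real \<gamma> ^ (l+1) = real n" proof -
    have "real al1 * real \<gamma> ^ (l+1) = (real \<gamma> * real al1) * real \<gamma> ^ l" by (simp add: algebra_simps)
    also have "\<dots> = real n" using assms(7,8) g1 by (simp add: field_simps)
    finally show ?thesis .
  qed
  moreover have "real \<gamma> ^ (l+1) > 0" using g1 by simp
  ultimately have "real al1 \<ge> 1"
    by (smt (verit, best) mult_less_cancel_right2)
  hence s: "sqrt (real al1) > 0" by simp
  have c: "sqrt (2 * real al1) = sqrt 2 * sqrt (real al1)" by (simp add: real_sqrt_mult)
  have finD: "finite D" using assms(19,13) by (metis card.infinite not_numeral_le_zero le_zero_eq numeral_le_iff zero_neq_numeral) 
  define good where "good p = {k\<in>D. rdist (fst p) (squarelet (sqrt (real al1)) k) \<ge> sqrt (2 * real al1) \<and>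
         rdist (snd p) (squarelet (sqrt (real al1)) k) \<ge> sqrt (2 * real al1)}" for p :: "(real\<times>real)\<times>(real\<times>real)"
  have goodc: "card (good p) \<ge> M div 2" for p
  proof -
    let ?b = "\<lambda>u. {k \<in> D. rdist u (squarelet (sqrt (real al1)) k) < sqrt 2 * sqrt (real al1)}"
    have "D \<subseteq> good p \<union> (?b (fst p) \<union> ?b (snd p))" unfolding good_def c by auto
    hence "card D \<le> card (good p \<union> (?b (fst p) \<union> ?b (snd p)))" by (rule card_mono[rotated]) (simp add: finD good_def)
    also have "\<dots> \<le> card (good p) + (card (?b (fst p)) + card (?b (snd p)))"
      by (metis (no_types, lifting) add_le_mono card_Un_le le_refl order_trans)
    also have "\<dots> \<le> card (good p) + 32" using bad_card[OF s, of D "fst p"] bad_card[OF s, of D "snd p"] by linarith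
    finally show ?thesis using assms(19,13) by linarith
  qed
  define R where "R p = (SOME X. X \<subseteq> good p \<and> card X = M div 2 \<and> finite X)" for p
  have R: "R p \<subseteq> good p \<and> card (R p) = M div 2 \<and> finite (R p)" for p
  proof -
    obtain T where "T \<subseteq> good p" "card T = M div 2" "finite T" using obtain_subset_with_card_n[OF goodc[of p]] by blast
    hence "\<exists>X. X \<subseteq> good p \<and> card X = M div 2 \<and> finite X" by blast
    thus ?thesis unfolding R_def by (rule someI_ex)
  qed
  have finlam: "finite lam" using assms(14,20) finite_subset by blast
  have "inj_on fst lam" unfolding inj_on_def
  proof (intro ballI impI)
    fix x y assume xy: "x \<in> lam" "y \<in> lam" "fst x = fst y"
    hence "fst x \<in> V" using assms(20) by auto
    then obtain w where "\<forall>w'. (fst x, w') \<in> lam \<longrightarrow> w' = w" using assms(21) by metis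
    hence "snd x = snd y" using xy by (metis prod.collapse)
    thus "x = y" using xy(3) by (simp add: prod_eq_iff)
  qed
  hence "card lam = card (fst ` lam)" by (simp add: card_image)
  also have "\<dots> \<le> card V" using assms(14,20) by (intro card_mono) auto
  finally have cl: "card lam \<le> nl" using assms(15) by simp
  have "real nl = 2 * real \<gamma> * real nl1" using assms(10) g1 by (simp add: field_simps)
  hence "nl = 2 * \<gamma> * nl1" by (metis of_nat_eq_iff of_nat_mult of_nat_numeral)
  hence cl2: "card lam \<le> (2*\<gamma>) * nl1" using cl by simp
  obtain P where P: "partition_on {(p, k). p \<in> lam \<and> k \<in> R p} P" "card P \<le> M div 2 * (2*\<gamma>)"
     "\<forall>C\<in>P. (\<forall>p. card {k. (p, k) \<in> C} \<le> 1) \<and> (\<forall>k. card {p. (p, k) \<in> C} \<le> nl1)"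
    using partition_exists[OF finlam _ cl2, of R "M div 2"] R by blast
  have "M div 2 * (2*\<gamma>) = M * \<gamma>" using assms(12) by auto
  hence "real (card P) \<le> real M * real \<gamma>" using P(2) by (metis of_nat_le_iff of_nat_mult)
  also have "\<dots> = K2 rmin * real \<gamma> ^ 2 / 2 ^ l" using assms(11) by (simp add: power2_eq_square)
  finally have cP: "real (card P) \<le> K2 rmin * real \<gamma> ^ 2 / 2 ^ l" .
  have "\<forall>p\<in>lam. R p \<subseteq> D \<and> card (R p) = M div 2 \<and>
              (\<forall>k\<in>R p. rdist (fst p) (squarelet (sqrt (real al1)) k) \<ge> sqrt (2 * real al1) \<and>
                        rdist (snd p) (squarelet (sqrt (real al1)) k) \<ge> sqrt (2 * real al1))"
    using R unfolding good_def by blast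
  thus ?thesis using P(1,3) cP by blast
qed

end
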